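(* Consider the nearest-neighbor graph $\mathcal{G}^\mu_{x(k)}$ for a positive integer $\mu$. The maximizing algorithm (in $\mathcal{A}_{\rm max}$) achieves global finite-time consensus within at most $\lceil n/\mu\rceil$ steps: for every initial time $k_0$ and initial value $x^0\in\mathbb{R}^n$, all $x_i(k_0+\lceil n/\mu\rceil)$ are equal.
   Context: Nodes $\mathcal{V}=\{1,\dots,n\}$, $n\ge3$, states $x_i(k)\in\mathbb{R}$, discrete time. The class $\mathcal{A}_{\rm max}$ is the update $x_i(k+1)=\max_{j\in\mathcal{N}_i(k)}x_j(k)$, where $\mathcal{N}_i(k)=\{i\}\cup\mathcal{N}_i^-(k)\cup\mathcal{N}_i^+(k)$. Nearest-neighbor graph $\mathcal{G}^\mu_{x(k)}$: $\mathcal{N}_i^-(k)$ is a set of $\min(\mu,|\{j:x_j(k)<x_i(k)\}|)$ nodes $j$ with $x_j(k)<x_i(k)$ whose values are closest to $x_i(k)$ among such nodes (ties broken arbitrarily), and $\mathcal{N}_i^+(k)$ is defined symmetrically from $\{j: x_j(k)>x_i(k)\}$. $\lceil z\rceil$ is the smallest integer not smaller than $z$. *)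

theory Defs
  imports Complex_Main
begin

text \<open>Nodes are 1..n; a state is a function nat => real (only values on 1..n matter).\<close>

definition below_set :: "nat \<Rightarrow> (nat \<Rightarrow> real) \<Rightarrow> nat \<Rightarrow> nat set" where
  "below_set n x i = {j \<in> {1..n}. x j < x i}"

definition above_set :: "nat \<Rightarrow> (nat \<Rightarrow> real) \<Rightarrow> nat \<Rightarrow> nat set" where
  "above_set n x i = {j \<in> {1..n}. x j > x i}"

text \<open>S is a valid choice of N_i^- : min(mu, |below|) nodes below x_i whose values are
  closest to x_i among such nodes (ties arbitrary).\<close>
definition valid_lower :: "nat \<Rightarrow> nat \<Rightarrow> (nat \<Rightarrow> real) \<Rightarrow> nat \<Rightarrow> nat set \<Rightarrow> bool" where
  "valid_lower n \<mu> x i S \<longleftrightarrow>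
     S \<subseteq> below_set n x i \<and> card S = min \<mu> (card (below_set n x i)) \<and>
     (\<forall>j\<in>S. \<forall>l\<in>below_set n x i - S. \<bar>x i - x j\<bar> \<le> \<bar>x i - x l\<bar>)"

definition valid_upper :: "nat \<Rightarrow> nat \<Rightarrow> (nat \<Rightarrow> real) \<Rightarrow> nat \<Rightarrow> nat set \<Rightarrow> bool" where
  "valid_upper n \<mu> x i S \<longleftrightarrow>
     S \<subseteq> above_set n x i \<and> card S = min \<mu> (card (above_set n x i)) \<and>
     (\<forall>j\<in>S. \<forall>l\<in>above_set n x i - S. \<bar>x j - x i\<bar> \<le> \<bar>x l - x i\<bar>)"

text \<open>N is a neighbor set of i in some realization of the nearest-neighbor graph G^mu_x.\<close>
definition nn_neighbors :: "nat \<Rightarrow> nat \<Rightarrow> (nat \<Rightarrow> real) \<Rightarrow> nat \<Rightarrow> nat set \<Rightarrow> bool" where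
  "nn_neighbors n \<mu> x i N \<longleftrightarrow>
     (\<exists>Sm Sp. valid_lower n \<mu> x i Sm \<and> valid_upper n \<mu> x i Sp \<and> N = {i} \<union> Sm \<union> Sp)"

end

theory Submission
  imports Defs
begin

lemma count_lemma:
  fixes f :: "nat \<Rightarrow> real"
  shows "finite B \<Longrightarrow> min \<mu> (card B) \<le> card {i\<in>B. card {j\<in>B. f j > f i} < \<mu>}"
proof (induction "card B" arbitrary: B rule: less_induct)
  case less
  show ?case
  proof (cases "card B \<le> \<mu>")
    case True
    have "{i\<in>B. card {j\<in>B. f j > f i} < \<mu>} = B"
    proof -
      { fix i assume i: "i \<in> B"
        have "{j\<in>B. f j > f i} \<subseteq> B - {i}" by auto
        hence "card {j\<in>B. f j > f i} \<le> card (B - {i})"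
          using less.prems by (intro card_mono) auto
        also have "\<dots> < card B" using i less.prems by (metis card_Diff1_less)
        finally have "card {j\<in>B. f j > f i} < \<mu>" using True by simp }
      thus ?thesis by auto
    qed
    thus ?thesis by simp
  next
    case False
    hence ne: "B \<noteq> {}" by auto
    obtain m where m: "m \<in> B" "\<forall>j\<in>B. f m \<le> f j"
    proof -
      have "finite (f ` B)" "f ` B \<noteq> {}" using less.prems ne by auto
      then have "Min (f ` B) \<in> f ` B" by (rule Min_in)
      then obtain m where "m \<in> B" "f m = Min (f ` B)" by auto
      moreover have "\<forall>j\<in>B. f m \<le> f j" using calculation less.prems by auto
      ultimately show ?thesis using that by blast
    qed
    let ?B' = "B - {m}"
    have cB': "card ?B' < card B" using m less.prems by (metis card_Diff1_less)
    have IH: "min \<mu> (card ?B') \<le> card {i\<in>?B'. card {j\<in>?B'. f j > f i} < \<mu>}"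
      using less.hyps[OF cB'] less.prems by auto
    have cardB': "card ?B' = card B - 1" using m less.prems by simp
    have sub: "{i\<in>?B'. card {j\<in>?B'. f j > f i} < \<mu>} \<subseteq> {i\<in>B. card {j\<in>B. f j > f i} < \<mu>}"
    proof
      fix i assume "i \<in> {i\<in>?B'. card {j\<in>?B'. f j > f i} < \<mu>}"
      then have i: "i \<in> ?B'" "card {j\<in>?B'. f j > f i} < \<mu>" by auto
      have "{j\<in>B. f j > f i} = {j\<in>?B'. f j > f i}" using m i by force
      thus "i \<in> {i\<in>B. card {j\<in>B. f j > f i} < \<mu>}" using i by auto
    qed
    have "card {i\<in>?B'. card {j\<in>?B'. f j > f i} < \<mu>} \<le> card {i\<in>B. card {j\<in>B. f j > f i} < \<mu>}"
      using less.prems by (intro card_mono[OF _ sub]) auto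
    thus ?thesis using IH cardB' False by simp
  qed
qed

lemma step_lemma:
  fixes x x' :: "nat \<Rightarrow> real" and N :: "nat \<Rightarrow> nat set"
  assumes le: "\<forall>i\<in>{1..n}. x i \<le> M" and m: "m \<in> {1..n}" "x m = M"
    and nb: "\<And>i. i \<in> {1..n} \<Longrightarrow> nn_neighbors n \<mu> x i (N i) \<and> x' i = Max (x ` N i)"
  shows "(\<forall>i\<in>{1..n}. x' i \<le> M) \<and> x' m = M \<and>
    {i\<in>{1..n}. x' i < M} \<subseteq> {i\<in>{1..n}. x i < M} -
       {i\<in>{i\<in>{1..n}. x i < M}. card {j\<in>{i\<in>{1..n}. x i < M}. x j > x i} < \<mu>}"
proof -
  have props: "N i \<subseteq> {1..n} \<and> i \<in> N i \<and> finite (N i) \<and> x i \<le> x' i \<and> x' i \<le> M"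
    if i: "i \<in> {1..n}" for i
  proof -
    obtain Sm Sp where S: "valid_lower n \<mu> x i Sm" "valid_upper n \<mu> x i Sp" "N i = {i} \<union> Sm \<union> Sp"
      and x': "x' i = Max (x ` N i)"
      using nb[OF i] unfolding nn_neighbors_def by blast
    have sub: "N i \<subseteq> {1..n}" using S i
      unfolding valid_lower_def valid_upper_def below_set_def above_set_def by auto
    have fin: "finite (N i)" using sub finite_subset by blast
    have "x i \<le> x' i" unfolding x' using fin S(3) by (intro Max_ge) auto
    moreover have "x' i \<le> M" unfolding x' using fin S(3) sub le by (subst Max_le_iff) auto
    ultimately show ?thesis using sub fin S(3) by auto
  qed
  let ?B = "{i\<in>{1..n}. x i < M}"
  have "x' m = M" using props[OF m(1)] m by auto
  moreover have "{i\<in>{1..n}. x' i < M} \<subseteq> ?B - {i\<in>?B. card {j\<in>?B. x j > x i} < \<mu>}"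
  proof
    fix i assume "i \<in> {i\<in>{1..n}. x' i < M}"
    then have i: "i \<in> {1..n}" "x' i < M" by auto
    have "x i < M" using props[OF i(1)] i by auto
    moreover have "\<not> card {j\<in>?B. x j > x i} < \<mu>"
    proof
      assume C: "card {j\<in>?B. x j > x i} < \<mu>"
      obtain Sm Sp where S: "valid_lower n \<mu> x i Sm" "valid_upper n \<mu> x i Sp" "N i = {i} \<union> Sm \<union> Sp"
        and x': "x' i = Max (x ` N i)"
        using nb[OF i(1)] unfolding nn_neighbors_def by blast
      have fin: "finite (N i)" using props[OF i(1)] by auto
      have "m \<notin> Sp"
      proof
        assume "m \<in> Sp"
        then have "M \<le> x' i" unfolding x' using fin S(3) m by (metis Max_ge UnI2 finite_imageI image_eqI)
        thus False using i by simp
      qed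
      have Sp_sub: "Sp \<subseteq> above_set n x i" using S(2) unfolding valid_upper_def by auto
      have "Sp \<subseteq> {j\<in>?B. x j > x i}"
      proof
        fix j assume j: "j \<in> Sp"
        then have "j \<in> {1..n}" "x j > x i" using Sp_sub unfolding above_set_def by auto
        moreover have "x j \<noteq> M"
        proof
          assume "x j = M"
          then have "M \<le> x' i" unfolding x' using fin S(3) j by (metis Max_ge UnI2 finite_imageI image_eqI)
          thus False using i by simp
        qed
        ultimately show "j \<in> {j\<in>?B. x j > x i}" using le by force
      qed
      then have "card Sp \<le> card {j\<in>?B. x j > x i}" by (intro card_mono) auto
      with C have "card Sp < \<mu>" by simp
      then have cS: "card Sp = card (above_set n x i)" using S(2) unfolding valid_upper_def by auto
      have "finite (above_set n x i)" unfolding above_set_def by auto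
      then have "Sp = above_set n x i" using card_subset_eq Sp_sub cS by blast
      moreover have "m \<in> above_set n x i" using m \<open>x i < M\<close> unfolding above_set_def by auto
      ultimately show False using \<open>m \<notin> Sp\<close> by simp
    qed
    ultimately show "i \<in> ?B - {i\<in>?B. card {j\<in>?B. x j > x i} < \<mu>}" using i by auto
  qed
  ultimately show ?thesis using props by auto
qed

theorem theorem9:
  fixes n \<mu> k0 :: nat and x :: "nat \<Rightarrow> nat \<Rightarrow> real" and N :: "nat \<Rightarrow> nat \<Rightarrow> nat set"
  assumes "n \<ge> 3" and "\<mu> \<ge> 1"
    and "\<And>k i. k \<ge> k0 \<Longrightarrow> i \<in> {1..n} \<Longrightarrow>
           nn_neighbors n \<mu> (x k) i (N k i) \<and> x (Suc k) i = Max (x k ` N k i)"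
  shows "\<forall>i\<in>{1..n}. \<forall>j\<in>{1..n}.
           x (k0 + nat \<lceil>real n / real \<mu>\<rceil>) i = x (k0 + nat \<lceil>real n / real \<mu>\<rceil>) j"
proof -
  define M where "M = Max (x k0 ` {1..n})"
  have ne: "{1..n} \<noteq> {}" using assms(1) by auto
  obtain m where m: "m \<in> {1..n}" "x k0 m = M"
  proof -
    have "M \<in> x k0 ` {1..n}" unfolding M_def using ne by (intro Max_in) auto
    thus ?thesis using that by auto
  qed
  have le0: "\<forall>i\<in>{1..n}. x k0 i \<le> M" unfolding M_def by auto
  have inv: "(\<forall>i\<in>{1..n}. x (k0+t) i \<le> M) \<and> x (k0+t) m = M \<and>
      card {i\<in>{1..n}. x (k0+t) i < M} \<le> (n - 1) - t * \<mu>" for t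
  proof (induction t)
    case 0
    have "{i\<in>{1..n}. x k0 i < M} \<subseteq> {1..n} - {m}" using m by auto
    hence "card {i\<in>{1..n}. x k0 i < M} \<le> card ({1..n} - {m})" by (intro card_mono) auto
    also have "\<dots> = n - 1" using m by simp
    finally show ?case using le0 m by simp
  next
    case (Suc t)
    let ?B = "{i\<in>{1..n}. x (k0+t) i < M}"
    have st: "(\<forall>i\<in>{1..n}. x (k0+Suc t) i \<le> M) \<and> x (k0+Suc t) m = M \<and>
      {i\<in>{1..n}. x (k0+Suc t) i < M} \<subseteq> ?B - {i\<in>?B. card {j\<in>?B. x (k0+t) j > x (k0+t) i} < \<mu>}"
      using step_lemma[of n "x (k0+t)" M m \<mu> "N (k0+t)" "x (Suc (k0+t))"] Suc.IH m assms(3)[of "k0+t"]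
      by auto
    have finB: "finite ?B" by auto
    have cl: "min \<mu> (card ?B) \<le> card {i\<in>?B. card {j\<in>?B. x (k0+t) j > x (k0+t) i} < \<mu>}"
      by (rule count_lemma[OF finB])
    have "card {i\<in>{1..n}. x (k0+Suc t) i < M} \<le>
        card (?B - {i\<in>?B. card {j\<in>?B. x (k0+t) j > x (k0+t) i} < \<mu>})"
      using st by (intro card_mono) auto
    also have "\<dots> = card ?B - card {i\<in>?B. card {j\<in>?B. x (k0+t) j > x (k0+t) i} < \<mu>}"
      by (rule card_Diff_subset) auto
    also have "\<dots> \<le> card ?B - min \<mu> (card ?B)" using cl by simp
    also have "\<dots> \<le> (n - 1) - Suc t * \<mu>" using Suc.IH by auto
    finally show ?case using st by simp
  qed
  define T where "T = nat \<lceil>real n / real \<mu>\<rceil>"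
  have "real n / real \<mu> \<le> real T" unfolding T_def by linarith
  hence "real n \<le> real T * real \<mu>" using assms(2) by (simp add: divide_le_eq)
  hence nT: "n \<le> T * \<mu>" by (metis of_nat_le_iff of_nat_mult)
  have "card {i\<in>{1..n}. x (k0+T) i < M} = 0" using inv[of T] nT by simp
  hence "{i\<in>{1..n}. x (k0+T) i < M} = {}" by simp
  hence "\<forall>i\<in>{1..n}. x (k0+T) i = M" using inv[of T] by force
  thus ?thesis unfolding T_def by simp
qed

end
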